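(* Let $n$ be a positive odd integer. Then $$ \sum_{k=0}^{n-1}\frac{(aq;q^2)_k\,(-q/a;q^2)_k\, q^{2k}}{(q^2;q^2)_k} \equiv (-1)^{(n-1)/2} q^{(n^2-1)/2} \pmod{(1-aq^n)(a+q^n)}, $$ and $$ \sum_{k=0}^{n-1}\frac{(aq;q^2)_k\,(q/a;q^2)_k\, q^{2k}}{(q^2;q^2)_k} \equiv q^{(n^2-1)/2} \pmod{(1-aq^n)(a-q^n)}. $$
   Context: $a,q$ are indeterminates. The $q$-shifted factorial is $(y;q)_0=1$ and $(y;q)_m=(1-y)(1-yq)\cdots(1-yq^{m-1})$ for $m\geqslant1$. For rational functions $A,B$ and a polynomial $P$, $A\equiv B\pmod P$ means $A-B=P\cdot C/D$ for polynomials $C,D$ with $D$ coprime to $P$. *)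

theory Defs
  imports "HOL-Computational_Algebra.Polynomial" "HOL-Computational_Algebra.Fraction_Field"
begin

text \<open>Bivariate polynomials in the indeterminates a, q with integer coefficients:
  polynomials in a whose coefficients are polynomials in q.\<close>
type_synonym bipoly = "int poly poly"
type_synonym ratfun = "bipoly fract"

definition var_a :: bipoly where "var_a = [:0, 1:]"
definition var_q :: bipoly where "var_q = [:[:0, 1:]:]"

definition to_rf :: "bipoly \<Rightarrow> ratfun" where "to_rf p = Fract p 1"

definition qpoch :: "'a::comm_ring_1 \<Rightarrow> 'a \<Rightarrow> nat \<Rightarrow> 'a" where
  "qpoch y q m = (\<Prod>j<m. 1 - y * q ^ j)"

definition cong_rf :: "ratfun \<Rightarrow> ratfun \<Rightarrow> bipoly \<Rightarrow> bool" where
  "cong_rf A B P \<longleftrightarrow> (\<exists>C D. D \<noteq> 0 \<and> coprime D P \<and> A - B = Fract (P * C) D)"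

end

theory Submission
  imports Defs "HOL-Computational_Algebra.Polynomial_Factorial"
begin


lemma qpoch_0 [simp]: "qpoch y q 0 = 1" by (simp add: qpoch_def)

lemma qpoch_Suc: "qpoch y q (Suc k) = qpoch y q k * (1 - y * q ^ k)"
  by (simp add: qpoch_def)

lemma qpoch_Suc_shift: "qpoch y q (Suc k) = (1 - y) * qpoch (y * q) q k"
  unfolding qpoch_def by (subst prod.lessThan_Suc_shift) (simp add: mult_ac)

lemma qpoch_vanish:
  fixes p :: "'a::field"
  assumes "p \<noteq> 0" "m < k"
  shows "qpoch (inverse p ^ m) p k = 0"
proof -
  have "(1 - inverse p ^ m * p ^ m) = 0" using assms by (simp add: power_mult_distrib[symmetric])
  then show ?thesis unfolding qpoch_def using assms by (intro prod_zero) auto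
qed

lemma e_rec:
  fixes p :: "'a::field"
  assumes p0: "p \<noteq> 0" and D: "qpoch p p (Suc k) \<noteq> 0"
  shows "qpoch (inverse p ^ Suc m) p (Suc k) / qpoch p p (Suc k)
     = inverse p ^ Suc k * (qpoch (inverse p ^ m) p (Suc k) / qpoch p p (Suc k)
                           - qpoch (inverse p ^ m) p k / qpoch p p k)"
proof -
  define w where "w = inverse p"
  have wp: "w * p = 1" using p0 by (simp add: w_def)
  define X where "X = qpoch (w ^ m) p k"
  define D0 where "D0 = qpoch p p k"
  have DS: "qpoch p p (Suc k) = D0 * (1 - p * p ^ k)" by (simp add: qpoch_Suc D0_def)
  have D0: "D0 \<noteq> 0" and D1: "1 - p * p^k \<noteq> 0" using D DS by auto
  have A: "qpoch (w ^ Suc m) p (Suc k) = (1 - w ^ Suc m) * X"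
  proof -
    have "qpoch (w ^ Suc m) p (Suc k) = (1 - w ^ Suc m) * qpoch (w ^ Suc m * p) p k"
      by (rule qpoch_Suc_shift)
    also have "w ^ Suc m * p = w ^ m" using wp by (simp add: mult_ac)
    finally show ?thesis by (simp add: X_def)
  qed
  have B: "qpoch (w ^ m) p (Suc k) = X * (1 - w^m * p ^ k)" by (simp add: qpoch_Suc X_def)
  have wk: "w ^ k * p ^ k = 1" using wp by (simp add: power_mult_distrib[symmetric])
  have wp': "p * (w * Z) = Z" for Z using wp by (metis mult.assoc mult.commute mult_1)
  have wk': "p ^ k * (w ^ k * Z) = Z" for Z using wk by (metis mult.assoc mult.commute mult_1)
  show ?thesis
    unfolding w_def[symmetric] A B DS X_def[symmetric] D0_def[symmetric]
    using D0 D1 by (simp add: field_simps) (simp add: wp' wk' algebra_simps, simp add: wk[unfolded mult.commute[of "w^k"]])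
qed

lemma chu:
  fixes p b :: "'a::field"
  assumes p0: "p \<noteq> 0" and D: "\<And>j. qpoch p p j \<noteq> 0"
  shows "m < N \<Longrightarrow> (\<Sum>k<N. qpoch (inverse p ^ m) p k * qpoch b p k * p^k / qpoch p p k) = b^m"
proof (induction m arbitrary: N)
  case 0
  then obtain M where N: "N = Suc M" by (cases N) auto
  have z: "qpoch 1 p (Suc k) = 0" for k by (simp add: qpoch_Suc_shift)
  show ?case unfolding N sum.lessThan_Suc_shift by (simp add: z qpoch_0)
next
  case (Suc m)
  then obtain M where N: "N = Suc M" and mM: "m < M" by (cases N) auto
  define e where "e m k = qpoch (inverse p ^ m) p k / qpoch p p k" for m k
  define B where "B k = qpoch b p k" for k
  define f where "f k = e m k * B k" for k
  have re: "qpoch (inverse p ^ m') p k * qpoch b p k * p^k / qpoch p p k = e m' k * B k * p^k" for m' k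
    by (simp add: e_def B_def)
  have IH: "(\<Sum>k<M. e m k * B k * p^k) = b^m" using Suc.IH[OF mM] re by simp
  have step: "e (Suc m) (Suc k) * B (Suc k) * p ^ Suc k = (f (Suc k) - f k) + b * (e m k * B k * p^k)" for k
  proof -
    have "e (Suc m) (Suc k) * p ^ Suc k = e m (Suc k) - e m k"
    proof -
      have i1: "inverse p ^ Suc k * p ^ Suc k = 1" using p0 by (simp only: power_mult_distrib[symmetric] left_inverse[OF p0] power_one)
      have "e (Suc m) (Suc k) * p ^ Suc k = (inverse p ^ Suc k * p ^ Suc k) * (e m (Suc k) - e m k)"
      proof -
        have eq: "e (Suc m) (Suc k) = inverse p ^ Suc k * (e m (Suc k) - e m k)"
          unfolding e_def by (rule e_rec[OF p0 D])
        show ?thesis by (simp only: eq mult_ac)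
      qed
      then show ?thesis by (simp only: i1 mult_1)
    qed
    note h1 = this
    have h2: "B (Suc k) = B k * (1 - b * p^k)" by (simp add: B_def qpoch_Suc)
    have "e (Suc m) (Suc k) * B (Suc k) * p ^ Suc k = (e (Suc m) (Suc k) * p ^ Suc k) * B (Suc k)"
      by (simp only: mult_ac)
    also have "\<dots> = (e m (Suc k) - e m k) * B (Suc k)" by (simp only: h1)
    also have "\<dots> = f (Suc k) - e m k * (B k * (1 - b * p^k))"
      unfolding f_def h2[symmetric] by (simp add: algebra_simps)
    also have "\<dots> = (f (Suc k) - f k) + b * (e m k * B k * p^k)"
      unfolding f_def by (simp add: algebra_simps)
    finally show ?thesis .
  qed
  have f0: "f 0 = 1" by (simp add: f_def e_def B_def qpoch_def)
  have fM: "f M = 0" using qpoch_vanish[OF p0 mM] by (simp add: f_def e_def)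
  have "(\<Sum>k<N. e (Suc m) k * B k * p^k) = 1 + (\<Sum>k<M. e (Suc m) (Suc k) * B (Suc k) * p ^ Suc k)"
    unfolding N sum.lessThan_Suc_shift by (simp add: e_def B_def qpoch_def)
  also have "\<dots> = 1 + (\<Sum>k<M. f (Suc k) - f k) + b * (\<Sum>k<M. e m k * B k * p^k)"
    by (simp only: step sum.distrib sum_distrib_left add.assoc)
  also have "\<dots> = b ^ Suc m" by (simp add: sum_lessThan_telescope f0 fM IH)
  finally show ?case by (simp only: re)
qed



definition goodd :: "bipoly \<Rightarrow> bipoly \<Rightarrow> bool" where
  "goodd P d \<longleftrightarrow> d \<noteq> 0 \<and> coprime d P"
definition good :: "bipoly \<Rightarrow> ratfun \<Rightarrow> bool" where
  "good P x \<longleftrightarrow> (\<exists>c d. goodd P d \<and> x = Fract c d)"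
definition inI :: "bipoly \<Rightarrow> bipoly \<Rightarrow> ratfun \<Rightarrow> bool" where
  "inI P P1 x \<longleftrightarrow> (\<exists>c d. goodd P d \<and> x = Fract (P1 * c) d)"
definition congI :: "bipoly \<Rightarrow> bipoly \<Rightarrow> ratfun \<Rightarrow> ratfun \<Rightarrow> bool" where
  "congI P P1 x y \<longleftrightarrow> inI P P1 (x - y)"

lemma goodd_mult: "goodd P a \<Longrightarrow> goodd P b \<Longrightarrow> goodd P (a * b)"
  by (auto simp: goodd_def)

lemma goodd_1: "goodd P 1" by (simp add: goodd_def)

lemma good_Fract: "goodd P d \<Longrightarrow> good P (Fract c d)"
  by (auto simp: good_def)

lemma good_to_rf: "good P (to_rf c)"
  unfolding to_rf_def by (rule good_Fract[OF goodd_1])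

lemma good_0: "good P 0" by (metis Zero_fract_def good_Fract goodd_1)
lemma good_1: "good P 1" by (metis One_fract_def good_Fract goodd_1)

lemma good_add: assumes "good P x" "good P y" shows "good P (x + y)"
proof -
  obtain c d where 1: "goodd P d" "x = Fract c d" using assms(1) good_def by blast
  obtain c' d' where 2: "goodd P d'" "y = Fract c' d'" using assms(2) good_def by blast
  have "x + y = Fract (c * d' + c' * d) (d * d')" using 1 2 by (simp add: goodd_def)
  then show ?thesis using goodd_mult[OF 1(1) 2(1)] good_def by blast
qed

lemma good_minus: assumes "good P x" shows "good P (- x)"
proof -
  obtain c d where 1: "goodd P d" "x = Fract c d" using assms(1) good_def by blast
  have "- x = Fract (- c) d" using 1 by simp
  then show ?thesis using 1 good_def by blast
qed

lemma good_diff: "good P x \<Longrightarrow> good P y \<Longrightarrow> good P (x - y)"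
  using good_add good_minus by (metis diff_conv_add_uminus)

lemma good_mult: assumes "good P x" "good P y" shows "good P (x * y)"
proof -
  obtain c d where 1: "goodd P d" "x = Fract c d" using assms(1) good_def by blast
  obtain c' d' where 2: "goodd P d'" "y = Fract c' d'" using assms(2) good_def by blast
  have "x * y = Fract (c * c') (d * d')" using 1 2 by (simp add: goodd_def)
  then show ?thesis using goodd_mult[OF 1(1) 2(1)] good_def by blast
qed

lemma good_power: "good P x \<Longrightarrow> good P (x ^ k)"
  by (induction k) (auto intro: good_mult good_1)

lemma good_qpoch: "good P x \<Longrightarrow> good P z \<Longrightarrow> good P (qpoch x z k)"
  by (induction k) (auto simp: qpoch_Suc intro!: good_mult good_diff good_1 good_power)

lemma good_inv: "goodd P d \<Longrightarrow> good P (inverse (to_rf d))"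
  by (simp add: to_rf_def good_Fract)

lemma inI_add: assumes "inI P P1 x" "inI P P1 y" shows "inI P P1 (x + y)"
proof -
  obtain c d where 1: "goodd P d" "x = Fract (P1 * c) d" using assms(1) inI_def by blast
  obtain c' d' where 2: "goodd P d'" "y = Fract (P1 * c') d'" using assms(2) inI_def by blast
  have "x + y = Fract (P1 * (c * d' + c' * d)) (d * d')" using 1 2 by (simp add: goodd_def algebra_simps)
  then show ?thesis using goodd_mult[OF 1(1) 2(1)] inI_def by blast
qed

lemma inI_mult: assumes "good P x" "inI P P1 y" shows "inI P P1 (x * y)"
proof -
  obtain c d where 1: "goodd P d" "x = Fract c d" using assms(1) good_def by blast
  obtain c' d' where 2: "goodd P d'" "y = Fract (P1 * c') d'" using assms(2) inI_def by blast
  have "x * y = Fract (P1 * (c * c')) (d * d')" using 1 2 by (simp add: algebra_simps)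
  then show ?thesis using goodd_mult[OF 1(1) 2(1)] inI_def by blast
qed

lemma inI_mult2: "inI P P1 y \<Longrightarrow> good P x \<Longrightarrow> inI P P1 (y * x)"
  using inI_mult by (metis mult.commute)

lemma inI_0: "inI P P1 0"
  unfolding inI_def by (rule exI[of _ 0], rule exI[of _ 1]) (simp add: goodd_1 Zero_fract_def)

lemma congI_refl: "congI P P1 x x" by (simp add: congI_def inI_0)

lemma congI_mult:
  assumes "good P x" "good P y'" "congI P P1 x y" "congI P P1 x' y'"
  shows "congI P P1 (x * x') (y * y')"
proof -
  have "x * x' - y * y' = x * (x' - y') + (x - y) * y'" by (simp add: algebra_simps)
  then show ?thesis using assms unfolding congI_def by (metis inI_add inI_mult inI_mult2)
qed

lemma congI_add:
  assumes "congI P P1 x y" "congI P P1 x' y'"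
  shows "congI P P1 (x + x') (y + y')"
proof -
  have "x + x' - (y + y') = (x - y) + (x' - y')" by (simp add: algebra_simps)
  then show ?thesis using assms unfolding congI_def by (metis inI_add)
qed

lemma congI_qpoch:
  assumes "good P x" "good P y" "good P z" "congI P P1 x y"
  shows "congI P P1 (qpoch x z k) (qpoch y z k)"
proof (induction k)
  case 0 then show ?case by (simp add: congI_refl)
next
  case (Suc k)
  have "congI P P1 (1 - x * z^k) (1 - y * z^k)"
  proof -
    have "1 - x * z^k - (1 - y * z^k) = (- 1) * ((x - y) * z^k)" by (simp add: algebra_simps)
    then show ?thesis using assms unfolding congI_def by (metis inI_mult inI_mult2 good_power good_minus good_1)
  qed
  then show ?case unfolding qpoch_Suc using assms Suc
    by (intro congI_mult good_qpoch good_diff good_1 good_mult good_power) auto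
qed

lemma congI_sum:
  fixes n :: nat
  assumes "\<And>k. k < n \<Longrightarrow> congI P P1 (f k) (g k)"
  shows "congI P P1 (\<Sum>k<n. f k) (\<Sum>k<n. g k)"
  using assms by (induction n) (auto simp: congI_refl intro!: congI_add)

lemma sum_cong:
  assumes "good P x" "good P x'" "good P y" "good P y'" "good P z"
    "congI P P1 x x'" "congI P P1 y y'"
    "\<And>k. good P (c k)" "\<And>k. good P (inverse (d k))"
  shows "congI P P1 (\<Sum>k<n. qpoch x z k * qpoch y z k * c k / d k)
                     (\<Sum>k<n. qpoch x' z k * qpoch y' z k * c k / d k)"
proof (rule congI_sum)
  fix k
  show "congI P P1 (qpoch x z k * qpoch y z k * c k / d k) (qpoch x' z k * qpoch y' z k * c k / d k)"
    unfolding divide_inverse using assms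
    by (intro congI_mult congI_qpoch good_mult good_qpoch congI_refl) auto
qed

lemma combine:
  assumes "coprime P1 P2" "inI (P1 * P2) P1 X" "inI (P1 * P2) P2 X"
  shows "\<exists>C D. D \<noteq> 0 \<and> coprime D (P1 * P2) \<and> X = Fract ((P1 * P2) * C) D"
proof -
  obtain c1 d1 where 1: "goodd (P1 * P2) d1" "X = Fract (P1 * c1) d1" using assms(2) inI_def by blast
  obtain c2 d2 where 2: "goodd (P1 * P2) d2" "X = Fract (P2 * c2) d2" using assms(3) inI_def by blast
  have nz: "d1 \<noteq> 0" "d2 \<noteq> 0" using 1 2 by (auto simp: goodd_def)
  have eq: "P1 * c1 * d2 = P2 * c2 * d1" using 1 2 nz eq_fract(1) by metis
  have "P1 * P2 dvd P1 * c1 * d2"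
  proof (rule divides_mult)
    show "P2 dvd P1 * c1 * d2" unfolding eq by (metis dvd_triv_left dvd_mult2)
  qed (auto simp: assms(1) mult.assoc)
  then obtain E where E: "P1 * c1 * d2 = P1 * P2 * E" by blast
  have "X = Fract (P1 * c1 * d2) (d1 * d2)" using 1 nz
    by (metis mult.commute mult_fract_cancel)
  then have "X = Fract (P1 * P2 * E) (d1 * d2)" using E by simp
  moreover have "goodd (P1 * P2) (d1 * d2)" using goodd_mult[OF 1(1) 2(1)] .
  ultimately show ?thesis unfolding goodd_def by blast
qed



lemma to_rf_mult [simp]: "to_rf (a * b) = to_rf a * to_rf b" by (simp add: to_rf_def)
lemma to_rf_add [simp]: "to_rf (a + b) = to_rf a + to_rf b" by (simp add: to_rf_def)
lemma to_rf_minus [simp]: "to_rf (- a) = - to_rf a" by (simp add: to_rf_def)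
lemma to_rf_diff [simp]: "to_rf (a - b) = to_rf a - to_rf b" by (simp add: to_rf_def)
lemma to_rf_1 [simp]: "to_rf 1 = 1" by (simp add: to_rf_def One_fract_def)
lemma to_rf_0 [simp]: "to_rf 0 = 0" by (simp add: to_rf_def Zero_fract_def)
lemma to_rf_power [simp]: "to_rf (a ^ k) = to_rf a ^ k" by (induction k) auto
lemma to_rf_inj [simp]: "to_rf a = to_rf b \<longleftrightarrow> a = b" by (simp add: to_rf_def eq_fract)
lemma to_rf_eq0 [simp]: "to_rf a = 0 \<longleftrightarrow> a = 0" using to_rf_inj[of a 0] by simp
lemma to_rf_qpoch: "to_rf (qpoch a b k) = qpoch (to_rf a) (to_rf b) k"
  by (induction k) (auto simp: qpoch_Suc)
lemma Fract_to_rf: "d \<noteq> 0 \<Longrightarrow> Fract c d = to_rf c / to_rf d"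
  by (simp add: to_rf_def)

lemma qpoch_const: "qpoch [:x:] [:y:] k = [:qpoch x y k:]"
  by (induction k) (auto simp: qpoch_Suc poly_const_pow one_pCons mult_ac)

lemma unit_lemma:
  fixes d :: bipoly
  assumes "c \<noteq> 0" "d dvd [:c:]" "d dvd Q" "coeff Q i = 1"
  shows "is_unit d"
proof -
  have "degree d \<le> degree [:c:]" using assms(1,2) by (intro dvd_imp_degree_le) auto
  then have dd: "[:coeff d 0:] = d" by (intro degree_0_id) auto
  have "coeff d 0 dvd coeff Q i" using assms(3) dd const_poly_dvd_iff by metis
  then have "coeff d 0 dvd 1" using assms(4) by simp
  then show ?thesis using dd is_unit_const_poly_iff by metis
qed

lemma coprime_const:
  fixes Q :: bipoly
  assumes "c \<noteq> 0" "coeff Q i = 1"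
  shows "coprime [:c:] Q"
  by (rule coprimeI) (use unit_lemma assms in blast)

definition XX :: "int poly" where "XX = [:0, 1:]"

lemma var_q_pow: "var_q ^ k = [:XX ^ k:]"
  by (simp add: var_q_def XX_def poly_const_pow)

lemma XX_pow_nz: "XX ^ k \<noteq> 0" by (simp add: XX_def)

lemma qpoch_XX_nz: "qpoch (XX^2) (XX^2) k \<noteq> 0"
proof -
  have "coeff (1 - XX^2 * (XX^2)^j) 0 = 1" for j by (simp add: XX_def power2_eq_square)
  then have "1 - XX^2 * (XX^2)^j \<noteq> 0" for j by (metis coeff_0 zero_neq_one)
  then show ?thesis unfolding qpoch_def by (simp add: prod_zero_iff)
qed



lemma inI_intro: "goodd P d \<Longrightarrow> x = to_rf (P1 * c) / to_rf d \<Longrightarrow> inI P P1 x"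
  unfolding inI_def goodd_def by (metis Fract_to_rf)

lemma part:
  fixes \<sigma> :: int and m n :: nat
  assumes sg: "\<sigma> = 1 \<or> \<sigma> = -1" and nm: "n = 2 * m + 1"
  defines "s \<equiv> [:[:\<sigma>:]:]"
  defines "P1 \<equiv> 1 - var_a * var_q ^ n" and "P2 \<equiv> var_a - s * var_q ^ n"
  defines "A \<equiv> to_rf var_a" and "Q \<equiv> to_rf var_q" and "S \<equiv> to_rf s"
  shows "cong_rf (\<Sum>k<n. qpoch (A * Q) (Q^2) k * qpoch (S * Q / A) (Q^2) k * Q ^ (2 * k)
                           / qpoch (Q^2) (Q^2) k)
                 (S ^ m * Q ^ ((n^2 - 1) div 2)) (P1 * P2)"
proof -
  define P where "P = P1 * P2"
  have n0: "n > 0" using nm by simp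
  have cP1: "coeff P1 0 = 1" by (simp add: P1_def var_a_def)
  have cP2: "coeff P2 1 = 1" by (simp add: P2_def var_a_def s_def var_q_pow)
  have cA1: "coprime var_a P1"
  proof (rule coprimeI)
    fix d assume "d dvd var_a" "d dvd P1"
    then have "d dvd P1 + var_a * var_q ^ n" by simp
    then show "is_unit d" by (simp add: P1_def)
  qed
  have cA2: "coprime var_a P2"
  proof (rule coprimeI)
    fix d assume d: "d dvd var_a" "d dvd P2"
    then have "d dvd var_a - P2" by simp
    also have "var_a - P2 = [:[:\<sigma>:] * XX ^ n:]" by (simp add: P2_def s_def var_q_pow)
    finally show "is_unit d" using d(1) sg
      by (intro unit_lemma[of "[:\<sigma>:] * XX ^ n" d var_a 1]) (auto simp: XX_def var_a_def)
  qed
  have c12: "coprime P1 P2"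
  proof (rule coprimeI)
    fix d assume d: "d dvd P1" "d dvd P2"
    then have "d dvd P1 + var_q ^ n * P2" by simp
    also have "P1 + var_q ^ n * P2 = [:1 - [:\<sigma>:] * XX ^ (2*n):]"
      by (simp add: P1_def P2_def s_def var_q_pow algebra_simps power_add[symmetric] mult_2 mult_2_right one_pCons)
    moreover have "1 - [:\<sigma>:] * XX ^ (2*n) \<noteq> 0"
    proof -
      have "coeff (1 - [:\<sigma>:] * XX ^ (2*n)) 0 = 1" using n0 by (simp add: coeff_0_power XX_def)
      then show ?thesis by (metis coeff_0 zero_neq_one)
    qed
    ultimately show "is_unit d" using d(2) cP2
      by (intro unit_lemma[of "1 - [:\<sigma>:] * XX ^ (2*n)" d P2 1]) auto
  qed
  have gc: "goodd P [:c:]" if "c \<noteq> 0" for c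
    using that cP1 cP2 unfolding goodd_def P_def
    by (auto intro: coprime_const)
  have gq: "goodd P (var_q ^ j)" for j unfolding var_q_pow by (rule gc) (rule XX_pow_nz)
  have ga: "goodd P var_a" using cA1 cA2 by (simp add: goodd_def P_def var_a_def)
  have Dk: "qpoch (var_q^2) (var_q^2) k = [:qpoch (XX^2) (XX^2) k:]" for k
    by (simp add: var_q_pow qpoch_const)
  have gD: "goodd P (qpoch (var_q^2) (var_q^2) k)" for k unfolding Dk by (rule gc) (rule qpoch_XX_nz)
  have Q0: "Q \<noteq> 0" by (simp add: Q_def var_q_def)
  have A0: "A \<noteq> 0" by (simp add: A_def var_a_def)
  define p where "p = Q^2"
  define W where "W = inverse p ^ m"
  define b where "b = S * p ^ (m + 1)"
  have p0: "p \<noteq> 0" using Q0 by (simp add: p_def)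
  have pD: "qpoch p p j \<noteq> 0" for j
  proof -
    have "qpoch p p j = to_rf (qpoch (var_q^2) (var_q^2) j)" by (simp add: to_rf_qpoch p_def Q_def)
    then show ?thesis using gD[of j] by (simp add: goodd_def)
  qed
  have chu1: "(\<Sum>k<n. qpoch W p k * qpoch b p k * p^k / qpoch p p k) = b ^ m"
    unfolding W_def using chu[OF p0 pD, of m n] nm by simp
  have bm: "b ^ m = S ^ m * Q ^ ((n^2 - 1) div 2)"
  proof -
    have "(n^2 - 1) div 2 = 2 * ((m + 1) * m)" unfolding nm by (simp add: power2_eq_square algebra_simps)
    then show ?thesis by (simp add: b_def p_def power_mult_distrib power_mult[symmetric] power_add[symmetric] mult_ac)
  qed
  define Sum where "Sum = (\<Sum>k<n. qpoch (A * Q) p k * qpoch (S * Q / A) p k * p ^ k / qpoch p p k)"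
  have Sum_eq: "(\<Sum>k<n. qpoch (A * Q) (Q^2) k * qpoch (S * Q / A) (Q^2) k * Q ^ (2 * k)
                           / qpoch (Q^2) (Q^2) k) = Sum"
    by (simp add: Sum_def p_def power_mult)
  have gA: "good P A" by (simp add: A_def good_to_rf)
  have gQ: "good P Q" by (simp add: Q_def good_to_rf)
  have gS: "good P S" by (simp add: S_def good_to_rf)
  have gAi: "good P (inverse A)" unfolding A_def by (rule good_inv[OF ga])
  have gp: "good P p" by (simp add: p_def gQ good_power)
  have gW: "good P W"
  proof -
    have "W = inverse (to_rf (var_q^2)) ^ m" by (simp add: W_def p_def Q_def)
    then show ?thesis using good_inv[OF gq] good_power by metis
  qed
  have gb: "good P b" by (simp add: b_def gS gp good_mult good_power)
  have gx: "good P (A * Q)" by (simp add: gA gQ good_mult)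
  have gy: "good P (S * Q / A)" by (simp add: divide_inverse gS gQ gAi good_mult)
  have gc': "good P (p ^ k)" for k by (simp add: gp good_power)
  have gDi: "good P (inverse (qpoch p p k))" for k
  proof -
    have "qpoch p p k = to_rf (qpoch (var_q^2) (var_q^2) k)" by (simp add: to_rf_qpoch p_def Q_def)
    then show ?thesis using good_inv[OF gD] by metis
  qed
  have nQ: "Q ^ n = Q * p ^ m" unfolding nm p_def by (simp add: power_mult)
  have toP1: "to_rf P1 = 1 - A * (Q * p ^ m)" by (simp add: P1_def A_def Q_def nQ[unfolded Q_def])
  have toP2: "to_rf P2 = A - S * (Q * p ^ m)" by (simp add: P2_def A_def Q_def S_def nQ[unfolded Q_def])
  have tq: "to_rf (var_q ^ (2*m)) = p ^ m" by (simp add: p_def Q_def power_mult)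
  have c1x: "congI P P1 (A * Q) W"
    unfolding congI_def
  proof (rule inI_intro[OF gq])
    show "A * Q - W = to_rf (P1 * (-1)) / to_rf (var_q ^ (2*m))"
      unfolding tq to_rf_mult toP1 using Q0 A0 p0 by (simp add: W_def field_simps)
  qed
  have c1y: "congI P P1 (S * Q / A) b"
    unfolding congI_def
  proof (rule inI_intro[OF ga])
    show "S * Q / A - b = to_rf (P1 * (s * var_q)) / to_rf var_a"
      unfolding to_rf_mult toP1 A_def[symmetric] Q_def[symmetric] S_def[symmetric]
      using Q0 A0 p0 by (simp add: b_def p_def field_simps power2_eq_square)
  qed
  have m1: "congI P P1 Sum (b ^ m)"
    unfolding Sum_def chu1[symmetric]
    by (rule sum_cong) (use gx gW gy gb gp c1x c1y gc' gDi in auto)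
  have c2x: "congI P P2 (A * Q) b"
    unfolding congI_def
  proof (rule inI_intro[OF goodd_1])
    show "A * Q - b = to_rf (P2 * var_q) / to_rf 1"
      unfolding to_rf_mult toP2 A_def[symmetric] Q_def[symmetric] S_def[symmetric]
      using Q0 A0 p0 by (simp add: b_def p_def field_simps power2_eq_square)
  qed
  have c2y: "congI P P2 (S * Q / A) W"
    unfolding congI_def
  proof (rule inI_intro[OF goodd_mult[OF ga gq]])
    show "S * Q / A - W = to_rf (P2 * (-1)) / to_rf (var_a * var_q ^ (2*m))"
      unfolding to_rf_mult tq toP2 A_def[symmetric] Q_def[symmetric] S_def[symmetric]
      using Q0 A0 p0 by (simp add: W_def field_simps)
  qed
  have chu2: "(\<Sum>k<n. qpoch b p k * qpoch W p k * p^k / qpoch p p k) = b ^ m"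
    unfolding chu1[symmetric] by (simp add: mult_ac)
  have m2: "congI P P2 Sum (b ^ m)"
    unfolding Sum_def chu2[symmetric]
    by (rule sum_cong) (use gx gW gy gb gp c2x c2y gc' gDi in auto)
  have "\<exists>C D. D \<noteq> 0 \<and> coprime D (P1 * P2) \<and> Sum - b ^ m = Fract ((P1 * P2) * C) D"
    using m1 m2 c12 unfolding congI_def P_def by (intro combine) auto
  then show ?thesis unfolding cong_rf_def Sum_eq bm .
qed



theorem theorem4p5:
  fixes n :: nat
  assumes "odd n"
  shows "cong_rf
           (\<Sum>k<n. qpoch (to_rf var_a * to_rf var_q) ((to_rf var_q)^2) k
                   * qpoch (- to_rf var_q / to_rf var_a) ((to_rf var_q)^2) k
                   * (to_rf var_q) ^ (2 * k)
                   / qpoch ((to_rf var_q)^2) ((to_rf var_q)^2) k)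
           ((-1) ^ ((n - 1) div 2) * (to_rf var_q) ^ ((n^2 - 1) div 2))
           ((1 - var_a * var_q ^ n) * (var_a + var_q ^ n))
       \<and> cong_rf
           (\<Sum>k<n. qpoch (to_rf var_a * to_rf var_q) ((to_rf var_q)^2) k
                   * qpoch (to_rf var_q / to_rf var_a) ((to_rf var_q)^2) k
                   * (to_rf var_q) ^ (2 * k)
                   / qpoch ((to_rf var_q)^2) ((to_rf var_q)^2) k)
           ((to_rf var_q) ^ ((n^2 - 1) div 2))
           ((1 - var_a * var_q ^ n) * (var_a - var_q ^ n))"
proof -
  obtain m where nm: "n = 2 * m + 1" using assms oddE by blast
  have m: "(n - 1) div 2 = m" using nm by simp
  have sm: "[:[:-1::int:]:] = (-1 :: bipoly)" by (simp add: one_pCons)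
  have sp: "[:[:1::int:]:] = (1 :: bipoly)" by (simp add: one_pCons)
  have 1: "var_a - (-1) * var_q ^ n = var_a + var_q ^ n" by simp
  show ?thesis
    using part[of "-1" n m, OF _ nm] part[of 1 n m, OF _ nm]
    unfolding sm sp m 1 by simp
qed

end
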